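(* Let $\mathcal{G}^1$ and $\mathcal{G}^2$ be any two edge-featured graphs (as described in the context). If the 1-WL algorithm distinguishes $\mathcal{G}^1$ and $\mathcal{G}^2$, then the E-WL algorithm also distinguishes $\mathcal{G}^1$ and $\mathcal{G}^2$. That is, the discriminative power of the E-WL algorithm is either equal to or greater than that of the 1-WL algorithm.
   Context: An edge-featured graph is $\mathcal{G}=(\mathcal{V},\mathcal{E},\mathcal{X}_V,\mathcal{X}_E)$: a finite undirected graph with no self-loops and no isolated nodes, where each node $n_i\in\mathcal{V}$ carries a discrete feature $x^n_i$ and each edge $e_{i,j}\in\mathcal{E}$ (joining $n_i$ and $n_j$) carries a discrete feature $x^e_{i,j}=x^e_{j,i}$. Write $\mathcal{N}_{(i)}$ for the set of neighbours of $n_i$, and $\{\{\cdot\}\}$ for a multiset. Both algorithms below are run on the two graphs simultaneously with the same injective function $HASH$ (so equal inputs give equal outputs and distinct inputs give distinct outputs, across both graphs). 1-WL: $c^{(0)}_i=x^n_i$ and $c^{(l)}_i=HASH\big(c^{(l-1)}_i,\{\{c^{(l-1)}_j : n_j\in\mathcal{N}_{(i)}\}\}\big)$. E-WL (Edged Weisfeiler–Lehman): $c^{(0)}_i=x^n_i$ and $c^{(l)}_i=HASH\big(c^{(l-1)}_i,T^{(l)}_i\big)$ where $T^{(l)}_i=\{\{(c^{(l-1)}_j,x^e_{i,j}) : n_j\in\mathcal{N}_{(i)}\}\}$ is the multiset of ordered pairs ("Node–Edge tuples") of neighbour colour and connecting edge feature. For either algorithm, iteration continues until the colours stabilize; the output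 for a graph is the multiset of node colours $\{\{c^{(l)}_i : n_i\in\mathcal{V}\}\}$. The algorithm distinguishes two graphs (declares them non-isomorphic) if the multisets of node colours of the two graphs differ (at some iteration $l$). *)

theory Defs
  imports Main "HOL-Library.Multiset"
begin

text \<open>An edge-featured graph over vertex type 'v: vertex set V, adjacency relation E,
  node features xn (discrete values, identified with level-0 colours of type 'c),
  edge features xe.\<close>

definition edge_featured_graph ::
  "'v set \<Rightarrow> ('v \<Rightarrow> 'v \<Rightarrow> bool) \<Rightarrow> ('v \<Rightarrow> 'v \<Rightarrow> 'e) \<Rightarrow> bool" where
  "edge_featured_graph V E xe \<longleftrightarrow>
     finite V
   \<and> (\<forall>i j. E i j \<longrightarrow> i \<in> V \<and> j \<in> V)
   \<and> (\<forall>i j. E i j \<longrightarrow> E j i)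
   \<and> (\<forall>i. \<not> E i i)
   \<and> (\<forall>i\<in>V. \<exists>j. E i j)
   \<and> (\<forall>i j. E i j \<longrightarrow> xe i j = xe j i)"

definition nbrs :: "'v set \<Rightarrow> ('v \<Rightarrow> 'v \<Rightarrow> bool) \<Rightarrow> 'v \<Rightarrow> 'v set" where
  "nbrs V E i = {j \<in> V. E i j}"

fun wl1_col ::
  "('c \<times> 'c multiset \<Rightarrow> 'c) \<Rightarrow> 'v set \<Rightarrow> ('v \<Rightarrow> 'v \<Rightarrow> bool) \<Rightarrow> ('v \<Rightarrow> 'c)
   \<Rightarrow> nat \<Rightarrow> 'v \<Rightarrow> 'c" where
  "wl1_col h V E xn 0 i = xn i"
| "wl1_col h V E xn (Suc l) i =
     h (wl1_col h V E xn l i, image_mset (wl1_col h V E xn l) (mset_set (nbrs V E i)))"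

fun ewl_col ::
  "('c \<times> ('c \<times> 'e) multiset \<Rightarrow> 'c) \<Rightarrow> 'v set \<Rightarrow> ('v \<Rightarrow> 'v \<Rightarrow> bool) \<Rightarrow> ('v \<Rightarrow> 'c)
   \<Rightarrow> ('v \<Rightarrow> 'v \<Rightarrow> 'e) \<Rightarrow> nat \<Rightarrow> 'v \<Rightarrow> 'c" where
  "ewl_col h V E xn xe 0 i = xn i"
| "ewl_col h V E xn xe (Suc l) i =
     h (ewl_col h V E xn xe l i,
        image_mset (\<lambda>j. (ewl_col h V E xn xe l j, xe i j)) (mset_set (nbrs V E i)))"

definition wl1_output where
  "wl1_output h V E xn l = image_mset (wl1_col h V E xn l) (mset_set V)"

definition ewl_output where
  "ewl_output h V E xn xe l = image_mset (ewl_col h V E xn xe l) (mset_set V)"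

definition wl1_distinguishes where
  "wl1_distinguishes h V1 E1 xn1 V2 E2 xn2 \<longleftrightarrow>
     (\<exists>l. wl1_output h V1 E1 xn1 l \<noteq> wl1_output h V2 E2 xn2 l)"

definition ewl_distinguishes where
  "ewl_distinguishes h V1 E1 xn1 xe1 V2 E2 xn2 xe2 \<longleftrightarrow>
     (\<exists>l. ewl_output h V1 E1 xn1 xe1 l \<noteq> ewl_output h V2 E2 xn2 xe2 l)"

end

theory Submission
  imports Defs
begin

lemma mem_mset_set_sub: "x \<in># mset_set A \<Longrightarrow> x \<in> A"
  by (cases "finite A") auto

lemma step_eq:
  assumes inj: "inj hE"
    and fa: "\<forall>i\<in>Va. wl1_col h1 Va Ea xna l i = f (ewl_col hE Va Ea xna xea l i)"
    and fb: "\<forall>j\<in>Vb. wl1_col h1 Vb Eb xnb l j = f (ewl_col hE Vb Eb xnb xeb l j)"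
    and eq: "ewl_col hE Va Ea xna xea (Suc l) i = ewl_col hE Vb Eb xnb xeb (Suc l) j"
    and i: "i \<in> Va" and j: "j \<in> Vb"
  shows "wl1_col h1 Va Ea xna (Suc l) i = wl1_col h1 Vb Eb xnb (Suc l) j"
proof -
  from eq inj have e1: "ewl_col hE Va Ea xna xea l i = ewl_col hE Vb Eb xnb xeb l j"
    and e2: "image_mset (\<lambda>k. (ewl_col hE Va Ea xna xea l k, xea i k)) (mset_set (nbrs Va Ea i))
           = image_mset (\<lambda>k. (ewl_col hE Vb Eb xnb xeb l k, xeb j k)) (mset_set (nbrs Vb Eb j))"
    by (auto dest: injD)
  from arg_cong[OF e2, of "image_mset (f \<circ> fst)"]
  have e3: "image_mset (\<lambda>k. f (ewl_col hE Va Ea xna xea l k)) (mset_set (nbrs Va Ea i))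
      = image_mset (\<lambda>k. f (ewl_col hE Vb Eb xnb xeb l k)) (mset_set (nbrs Vb Eb j))"
    by (simp add: multiset.map_comp o_def)
  have "image_mset (wl1_col h1 Va Ea xna l) (mset_set (nbrs Va Ea i))
      = image_mset (\<lambda>k. f (ewl_col hE Va Ea xna xea l k)) (mset_set (nbrs Va Ea i))"
    by (rule image_mset_cong) (use fa in \<open>auto dest!: mem_mset_set_sub simp: nbrs_def\<close>)
  also have "\<dots> = image_mset (\<lambda>k. f (ewl_col hE Vb Eb xnb xeb l k)) (mset_set (nbrs Vb Eb j))"
    by (rule e3)
  also have "\<dots> = image_mset (wl1_col h1 Vb Eb xnb l) (mset_set (nbrs Vb Eb j))"
    by (rule image_mset_cong) (use fb in \<open>auto dest!: mem_mset_set_sub simp: nbrs_def\<close>)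
  finally have m: "image_mset (wl1_col h1 Va Ea xna l) (mset_set (nbrs Va Ea i))
      = image_mset (wl1_col h1 Vb Eb xnb l) (mset_set (nbrs Vb Eb j))" .
  have "wl1_col h1 Va Ea xna l i = wl1_col h1 Vb Eb xnb l j"
    using fa fb i j e1 by simp
  with m show ?thesis by simp
qed

lemma exists_f:
  assumes inj: "inj hE"
  shows "\<exists>f. (\<forall>i\<in>V1. wl1_col h1 V1 E1 xn1 l i = f (ewl_col hE V1 E1 xn1 xe1 l i))
           \<and> (\<forall>j\<in>V2. wl1_col h1 V2 E2 xn2 l j = f (ewl_col hE V2 E2 xn2 xe2 l j))"
proof (induction l)
  case 0
  show ?case by (rule exI[of _ id]) simp
next
  case (Suc l)
  then obtain f where fa: "\<forall>i\<in>V1. wl1_col h1 V1 E1 xn1 l i = f (ewl_col hE V1 E1 xn1 xe1 l i)"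
    and fb: "\<forall>j\<in>V2. wl1_col h1 V2 E2 xn2 l j = f (ewl_col hE V2 E2 xn2 xe2 l j)" by blast
  let ?A = "ewl_col hE V1 E1 xn1 xe1 (Suc l)"
  let ?B = "ewl_col hE V2 E2 xn2 xe2 (Suc l)"
  define g where "g c = (if \<exists>i\<in>V1. ?A i = c then wl1_col h1 V1 E1 xn1 (Suc l) (SOME i. i \<in> V1 \<and> ?A i = c)
     else wl1_col h1 V2 E2 xn2 (Suc l) (SOME j. j \<in> V2 \<and> ?B j = c))" for c
  have s11: "wl1_col h1 V1 E1 xn1 (Suc l) i = wl1_col h1 V1 E1 xn1 (Suc l) i'"
    if "?A i = ?A i'" "i \<in> V1" "i' \<in> V1" for i i'
    by (rule step_eq[OF inj fa fa]) (use that in auto)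
  have s12: "wl1_col h1 V1 E1 xn1 (Suc l) i = wl1_col h1 V2 E2 xn2 (Suc l) j"
    if "?A i = ?B j" "i \<in> V1" "j \<in> V2" for i j
    by (rule step_eq[OF inj fa fb]) (use that in auto)
  have s22: "wl1_col h1 V2 E2 xn2 (Suc l) j = wl1_col h1 V2 E2 xn2 (Suc l) j'"
    if "?B j = ?B j'" "j \<in> V2" "j' \<in> V2" for j j'
    by (rule step_eq[OF inj fb fb]) (use that in auto)
  have "\<forall>i\<in>V1. wl1_col h1 V1 E1 xn1 (Suc l) i = g (?A i)"
  proof
    fix i assume i: "i \<in> V1"
    let ?i = "SOME i'. i' \<in> V1 \<and> ?A i' = ?A i"
    have "\<exists>i'. i' \<in> V1 \<and> ?A i' = ?A i" using i by blast
    from someI_ex[OF this] have c: "?i \<in> V1" "?A ?i = ?A i" by blast+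
    have "g (?A i) = wl1_col h1 V1 E1 xn1 (Suc l) ?i" unfolding g_def using i by auto
    also have "\<dots> = wl1_col h1 V1 E1 xn1 (Suc l) i" by (rule s11[OF c(2) c(1) i])
    finally show "wl1_col h1 V1 E1 xn1 (Suc l) i = g (?A i)" by (rule sym)
  qed
  moreover have "\<forall>j\<in>V2. wl1_col h1 V2 E2 xn2 (Suc l) j = g (?B j)"
  proof
    fix j assume j: "j \<in> V2"
    show "wl1_col h1 V2 E2 xn2 (Suc l) j = g (?B j)"
    proof (cases "\<exists>i\<in>V1. ?A i = ?B j")
      case True
      let ?i = "SOME i'. i' \<in> V1 \<and> ?A i' = ?B j"
      have "\<exists>i'. i' \<in> V1 \<and> ?A i' = ?B j" using True by blast
      from someI_ex[OF this] have c: "?i \<in> V1" "?A ?i = ?B j" by blast+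
      have "g (?B j) = wl1_col h1 V1 E1 xn1 (Suc l) ?i" unfolding g_def using True by simp
      also have "\<dots> = wl1_col h1 V2 E2 xn2 (Suc l) j" by (rule s12[OF c(2) c(1) j])
      finally show ?thesis by (rule sym)
    next
      case False
      let ?j = "SOME j'. j' \<in> V2 \<and> ?B j' = ?B j"
      have "\<exists>j'. j' \<in> V2 \<and> ?B j' = ?B j" using j by blast
      from someI_ex[OF this] have c: "?j \<in> V2" "?B ?j = ?B j" by blast+
      have "g (?B j) = wl1_col h1 V2 E2 xn2 (Suc l) ?j" unfolding g_def using False by simp
      also have "\<dots> = wl1_col h1 V2 E2 xn2 (Suc l) j" by (rule s22[OF c(2) c(1) j])
      finally show ?thesis by (rule sym)
    qed
  qed
  ultimately show ?case by (intro exI[of _ g] conjI)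
qed

theorem theorem1:
  fixes V1 :: "'v1 set" and E1 :: "'v1 \<Rightarrow> 'v1 \<Rightarrow> bool"
    and xn1 :: "'v1 \<Rightarrow> 'c" and xe1 :: "'v1 \<Rightarrow> 'v1 \<Rightarrow> 'e"
    and V2 :: "'v2 set" and E2 :: "'v2 \<Rightarrow> 'v2 \<Rightarrow> bool"
    and xn2 :: "'v2 \<Rightarrow> 'c" and xe2 :: "'v2 \<Rightarrow> 'v2 \<Rightarrow> 'e"
    and h1 :: "'c \<times> 'c multiset \<Rightarrow> 'c"
    and hE :: "'c \<times> ('c \<times> 'e) multiset \<Rightarrow> 'c"
  assumes "edge_featured_graph V1 E1 xe1"
    and "edge_featured_graph V2 E2 xe2"
    and "inj h1"
    and "inj hE"
    and "wl1_distinguishes h1 V1 E1 xn1 V2 E2 xn2"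
  shows "ewl_distinguishes hE V1 E1 xn1 xe1 V2 E2 xn2 xe2"
proof -
  from assms(5) obtain l where ne: "wl1_output h1 V1 E1 xn1 l \<noteq> wl1_output h1 V2 E2 xn2 l"
    unfolding wl1_distinguishes_def by blast
  have ex: "\<exists>f. (\<forall>i\<in>V1. wl1_col h1 V1 E1 xn1 l i = f (ewl_col hE V1 E1 xn1 xe1 l i))
    \<and> (\<forall>j\<in>V2. wl1_col h1 V2 E2 xn2 l j = f (ewl_col hE V2 E2 xn2 xe2 l j))"
    by (rule exists_f[OF assms(4)])
  then obtain f where fab: "(\<forall>i\<in>V1. wl1_col h1 V1 E1 xn1 l i = f (ewl_col hE V1 E1 xn1 xe1 l i))
    \<and> (\<forall>j\<in>V2. wl1_col h1 V2 E2 xn2 l j = f (ewl_col hE V2 E2 xn2 xe2 l j))"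
    by (rule exE)
  note fa = conjunct1[OF fab] and fb = conjunct2[OF fab]
  have "ewl_output hE V1 E1 xn1 xe1 l \<noteq> ewl_output hE V2 E2 xn2 xe2 l"
  proof
    assume eq: "ewl_output hE V1 E1 xn1 xe1 l = ewl_output hE V2 E2 xn2 xe2 l"
    have "wl1_output h1 V1 E1 xn1 l = image_mset f (ewl_output hE V1 E1 xn1 xe1 l)"
      unfolding wl1_output_def ewl_output_def multiset.map_comp
      by (rule image_mset_cong) (simp add: fa mem_mset_set_sub)
    also have "\<dots> = image_mset f (ewl_output hE V2 E2 xn2 xe2 l)" using eq by simp
    also have "\<dots> = wl1_output h1 V2 E2 xn2 l"
      unfolding wl1_output_def ewl_output_def multiset.map_comp
      by (rule image_mset_cong) (simp add: fb mem_mset_set_sub)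
    finally show False using ne by simp
  qed
  thus ?thesis unfolding ewl_distinguishes_def by blast
qed

end
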